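(* Let $X$ be a finite non-empty set and for every $a\in X$ let $\sigma_a,\tau_a:X\to X$ be maps with each $\sigma_a$ bijective (so that the special set-theoretic Yang–Baxter algebra ${\cal A}$ of these data is defined). Suppose $(X,+,0)$ is a group (not necessarily abelian) and $\sigma_{\sigma_a(b)}(\tau_b(a))=a$ for all $a,b\in X$. Define $a\circ b:=a+\sigma_a(b)$ for $a,b\in X$. \begin{enumerate} \item Then for all $a,b\in X$, $\sigma_a(b)\circ\tau_b(a)=-a+a\circ b+a$. \item If in addition $(X,\circ)$ is a semigroup and $\sigma_a(b+c)=\sigma_a(b)+\sigma_a(c)$ for all $a,b,c\in X$, then for all $a,b,c\in X$: (a) $\sigma_a(\sigma_b(c))=\sigma_{a\circ b}(c)$; (b) $(X,\circ,0)$ is a group; (c) $a\circ(b+c)=a\circ b-a+a\circ c$; (d) $\sigma_a(0)=0$, $\tau_0(a)=a$, $\sigma_0(a)=a$ and $\tau_a(0)=0$. \end{enumerate}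
   Context: The special set-theoretic Yang–Baxter algebra ${\cal A}$ is the unital associative algebra generated by $1_{\cal A},h_a,w_a,w_a^{-1}$ ($a\in X$) with relations $h_ah_b=\delta_{a,b}h_a$, $w_a^{-1}w_a=w_aw_a^{-1}=1_{\cal A}$, $w_aw_b=w_{\sigma_a(b)}w_{\tau_b(a)}$, $w_ah_b=h_{\sigma_a(b)}w_a$, where each $\sigma_a$ is a bijection; only the bijectivity of the $\sigma_a$ enters the statement. *)

theory Defs
  imports Main
begin

definition yb_circ :: "('a::group_add \<Rightarrow> 'a \<Rightarrow> 'a) \<Rightarrow> 'a \<Rightarrow> 'a \<Rightarrow> 'a" where
  "yb_circ \<sigma> a b = a + \<sigma> a b"

end

theory Submission
  imports Defs
begin

theorem theorem2p13:
  fixes \<sigma> \<tau> :: "'a::{finite, group_add} \<Rightarrow> 'a \<Rightarrow> 'a"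
  assumes bij: "\<And>a. bij (\<sigma> a)"
    and inv: "\<And>a b. \<sigma> (\<sigma> a b) (\<tau> b a) = a"
  shows "(\<forall>a b. yb_circ \<sigma> (\<sigma> a b) (\<tau> b a) = - a + yb_circ \<sigma> a b + a)
    \<and> (semigroup (yb_circ \<sigma>) \<and> (\<forall>a b c. \<sigma> a (b + c) = \<sigma> a b + \<sigma> a c) \<longrightarrow>
         (\<forall>a b c. \<sigma> a (\<sigma> b c) = \<sigma> (yb_circ \<sigma> a b) c)
       \<and> (\<exists>inv. group (yb_circ \<sigma>) 0 inv)
       \<and> (\<forall>a b c. yb_circ \<sigma> a (b + c) = yb_circ \<sigma> a b - a + yb_circ \<sigma> a c)
       \<and> (\<forall>a. \<sigma> a 0 = 0 \<and> \<tau> 0 a = a \<and> \<sigma> 0 a = a \<and> \<tau> a 0 = 0))"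
proof (intro conjI impI)
  have injs: "\<And>a x y. \<sigma> a x = \<sigma> a y \<Longrightarrow> x = y" using bij by (metis bij_def injD)
  show "\<forall>a b. yb_circ \<sigma> (\<sigma> a b) (\<tau> b a) = - a + yb_circ \<sigma> a b + a"
    by (simp add: yb_circ_def inv add.assoc)
  assume H: "semigroup (yb_circ \<sigma>) \<and> (\<forall>a b c. \<sigma> a (b + c) = \<sigma> a b + \<sigma> a c)"
  then have sg: "semigroup (yb_circ \<sigma>)" and add: "\<And>a b c. \<sigma> a (b + c) = \<sigma> a b + \<sigma> a c" by auto
  have ass: "\<And>a b c. yb_circ \<sigma> (yb_circ \<sigma> a b) c = yb_circ \<sigma> a (yb_circ \<sigma> b c)"
    using sg by (simp add: semigroup.assoc)
  show A: "\<forall>a b c. \<sigma> a (\<sigma> b c) = \<sigma> (yb_circ \<sigma> a b) c"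
  proof (intro allI)
    fix a b c
    have "a + \<sigma> a b + \<sigma> (yb_circ \<sigma> a b) c = a + (\<sigma> a b + \<sigma> a (\<sigma> b c))"
      using ass[of a b c] by (simp add: yb_circ_def add)
    then show "\<sigma> a (\<sigma> b c) = \<sigma> (yb_circ \<sigma> a b) c" by (simp add: add.assoc)
  qed
  have s0: "\<And>a. \<sigma> a 0 = 0" using add[of _ 0 0] by (metis add.right_neutral add_left_imp_eq)
  have z: "yb_circ \<sigma> 0 0 = 0" by (simp add: yb_circ_def s0)
  have id0: "\<And>c. \<sigma> 0 c = c"
  proof -
    fix c
    have "\<sigma> 0 (\<sigma> 0 c) = \<sigma> 0 c" using A z by metis
    then show "\<sigma> 0 c = c" by (rule injs)
  qed
  have lid: "\<And>a. yb_circ \<sigma> 0 a = a" by (simp add: yb_circ_def id0)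
  have rid: "\<And>a. yb_circ \<sigma> a 0 = a" by (simp add: yb_circ_def s0)
  define iv where "iv a = inv (\<sigma> a) (- a)" for a
  have rinv: "\<And>a. yb_circ \<sigma> a (iv a) = 0"
    using bij by (simp add: yb_circ_def iv_def bij_is_surj surj_f_inv_f)
  have linv: "\<And>a. yb_circ \<sigma> (iv a) a = 0"
  proof -
    fix a
    have "yb_circ \<sigma> (iv a) a = yb_circ \<sigma> (yb_circ \<sigma> (iv a) a) (yb_circ \<sigma> (iv a) (iv (iv a)))"
      by (simp add: rinv rid)
    also have "\<dots> = yb_circ \<sigma> (iv a) (yb_circ \<sigma> (yb_circ \<sigma> a (iv a)) (iv (iv a)))"
      by (simp add: ass)
    also have "\<dots> = 0" by (simp add: rinv lid)
    finally show "yb_circ \<sigma> (iv a) a = 0" .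
  qed
  show "\<exists>inv. group (yb_circ \<sigma>) 0 inv"
    by (rule exI[of _ iv], unfold_locales, simp_all add: ass lid linv)
  show "\<forall>a b c. yb_circ \<sigma> a (b + c) = yb_circ \<sigma> a b - a + yb_circ \<sigma> a c"
    by (simp add: yb_circ_def add diff_add_eq_diff_diff_swap) (metis add.assoc diff_add_cancel)
  show "\<forall>a. \<sigma> a 0 = 0 \<and> \<tau> 0 a = a \<and> \<sigma> 0 a = a \<and> \<tau> a 0 = 0"
  proof (intro allI conjI)
    fix a
    show "\<sigma> a 0 = 0" by (rule s0)
    show "\<sigma> 0 a = a" by (rule id0)
    show "\<tau> 0 a = a" using inv[of a 0] by (simp add: s0 id0)
    have "\<sigma> a (\<tau> a 0) = \<sigma> a 0" using inv[of 0 a] by (simp add: s0 id0)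
    then show "\<tau> a 0 = 0" by (rule injs)
  qed
qed

end
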